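(* Let $d\ge2$, $\mathbf u,\mathbf w\in\mathcal C_{d-1}$ with $\bar w_i>0$ for all $i\in\{1,\dots,d\}$, and $\mathbf r\in[0,1]^d\setminus\{\mathbf 0\}$. For $f(\mathbf x)=-\log\langle\mathbf r,\bar{\mathbf x}\rangle$, we have $$|\langle\nabla f(\mathbf w),\mathbf u-\mathbf w\rangle|\le 1\vee\max_{i\in[d]}\frac{\bar u_i}{\bar w_i}.$$
   Context: $\mathcal C_{d-1}=\{\mathbf u\in\mathbb R^{d-1}:u_i\ge0,\ \sum_iu_i\le1\}$. For $\mathbf v\in\mathbb R^{d-1}$, $\bar{\mathbf v}=(v_1,\dots,v_{d-1},1-\sum_{i=1}^{d-1}v_i)\in\mathbb R^d$. $a\vee b=\max(a,b)$ and $[d]=\{1,\dots,d\}$. *)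

theory Defs
  imports "HOL-Analysis.Analysis"
begin

text \<open>R^(d-1) is modelled as real^'n (d - 1 = CARD('n), so d \<ge> 2 automatically);
  R^d is modelled as real^('n option), the extra index None being the d-th coordinate.\<close>

definition simplexC :: "(real^'n) set" where
  "simplexC = {u. (\<forall>i. 0 \<le> u $ i) \<and> (\<Sum>i\<in>UNIV. u $ i) \<le> 1}"

definition bar :: "real^'n \<Rightarrow> real^('n option)" where
  "bar v = (\<chi> i. case i of Some j \<Rightarrow> v $ j | None \<Rightarrow> 1 - (\<Sum>j\<in>UNIV. v $ j))"

definition grad :: "(real^'n \<Rightarrow> real) \<Rightarrow> real^'n \<Rightarrow> real^'n" where
  "grad f x = (SOME g. (f has_derivative (\<lambda>h. g \<bullet> h)) (at x))"

end

theory Submission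
  imports Defs
begin

lemma sum_option_split:
  fixes f :: "'n::finite option \<Rightarrow> real"
  shows "(\<Sum>i\<in>UNIV. f i) = f None + (\<Sum>j\<in>UNIV. f (Some j))"
proof -
  have "(\<Sum>i\<in>UNIV. f i) = (\<Sum>i\<in>insert None (range Some). f i)"
    by (simp only: UNIV_option_conv[symmetric])
  also have "\<dots> = f None + (\<Sum>i\<in>range Some. f i)"
    by (subst sum.insert) auto
  also have "(\<Sum>i\<in>range Some. f i) = (\<Sum>j\<in>UNIV. f (Some j))"
    by (subst sum.reindex) (auto simp: inj_on_def)
  finally show ?thesis .
qed

lemma rbar:
  fixes r :: "real^('n::finite option)"
  shows "r \<bullet> bar x = r $ None + (\<chi> j. r $ Some j - r $ None) \<bullet> x"
  unfolding inner_vec_def bar_def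
  by (simp add: sum_option_split algebra_simps sum_distrib_left sum_subtractf)

lemma grad_unique:
  assumes "(f has_derivative (\<lambda>h. g \<bullet> h)) (at x)"
  shows "grad f x = g"
proof -
  have "(f has_derivative (\<lambda>h. grad f x \<bullet> h)) (at x)"
    unfolding grad_def using assms by (rule someI)
  then have "(\<lambda>h. grad f x \<bullet> h) = (\<lambda>h. g \<bullet> h)"
    using assms has_derivative_unique by blast
  then have "grad f x \<bullet> (grad f x - g) = g \<bullet> (grad f x - g)" by metis
  then have "(grad f x - g) \<bullet> (grad f x - g) = 0" by (simp add: inner_diff_left)
  then show ?thesis by simp
qed

theorem lemma16:
  fixes u w :: "real^'n" and r :: "real^('n option)"
  assumes "u \<in> simplexC" and "w \<in> simplexC"
    and "\<forall>i. bar w $ i > 0"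
    and "\<forall>i. 0 \<le> r $ i \<and> r $ i \<le> 1" and "r \<noteq> 0"
  shows "\<bar>grad (\<lambda>x. - ln (r \<bullet> bar x)) w \<bullet> (u - w)\<bar>
           \<le> max 1 (Max {bar u $ i / bar w $ i | i. i \<in> UNIV})"
proof -
  define a :: "real^'n" where "a = (\<chi> j. r $ Some j - r $ None)"
  define c where "c = r $ None"
  define D where "D = r \<bullet> bar w"
  have rb: "\<And>x. r \<bullet> bar x = c + a \<bullet> x" unfolding a_def c_def by (rule rbar)
  have ubar: "\<forall>i. bar u $ i \<ge> 0"
    using assms(1) unfolding simplexC_def bar_def by (auto split: option.splits)
  obtain k where k: "r $ k \<noteq> 0" using assms(5) by (metis vec_eq_iff zero_index)
  have Dpos: "D > 0"
  proof -
    have "r $ k * bar w $ k > 0" using k assms(3,4) by (metis less_eq_real_def mult_pos_pos)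
    moreover have "r $ k * bar w $ k \<le> (\<Sum>i\<in>UNIV. r $ i * bar w $ i)"
      by (rule member_le_sum) (use assms(3,4) in \<open>auto intro: mult_nonneg_nonneg less_imp_le\<close>)
    ultimately show ?thesis unfolding D_def inner_vec_def by simp
  qed
  define M where "M = Max {bar u $ i / bar w $ i | i. i \<in> UNIV}"
  have Mge: "\<And>i. bar u $ i / bar w $ i \<le> M"
    unfolding M_def by (rule Max_ge) (auto simp: full_SetCompr_eq)
  define N where "N = r \<bullet> bar u"
  have N0: "N \<ge> 0" unfolding N_def inner_vec_def
    using ubar assms(4) by (auto intro: sum_nonneg)
  have NM: "N \<le> M * D"
  proof -
    have "\<And>i. r $ i * bar u $ i \<le> M * (r $ i * bar w $ i)"
    proof -
      fix i
      have "bar u $ i \<le> M * bar w $ i" using Mge[of i] assms(3)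
        by (simp add: divide_le_eq)
      then show "r $ i * bar u $ i \<le> M * (r $ i * bar w $ i)"
        using assms(4) by (metis mult.left_commute mult_left_mono)
    qed
    then show ?thesis unfolding N_def D_def inner_vec_def
      by (simp add: sum_distrib_left sum_mono)
  qed
  define g where "g = (- inverse D) *\<^sub>R a"
  have der: "((\<lambda>x. - ln (r \<bullet> bar x)) has_derivative (\<lambda>h. g \<bullet> h)) (at w)"
  proof -
    have e: "(\<lambda>x. - ln (r \<bullet> bar x)) = (\<lambda>x. - ln (c + a \<bullet> x))" using rb by simp
    have "c + a \<bullet> w = D" using rb D_def by simp
    have d1: "((\<lambda>x. c + a \<bullet> x) has_derivative (\<lambda>h. a \<bullet> h)) (at w)"
      by (auto intro!: derivative_eq_intros)
    have d2: "(ln has_derivative (\<lambda>y. inverse D * y)) (at (c + a \<bullet> w))"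
      using DERIV_ln[OF Dpos] \<open>c + a \<bullet> w = D\<close> by (simp add: has_field_derivative_def)
    have "((\<lambda>x. - ln (c + a \<bullet> x)) has_derivative (\<lambda>h. - (inverse D * (a \<bullet> h)))) (at w)"
      using has_derivative_minus[OF has_derivative_compose[OF d1 d2]] by simp
    then show ?thesis unfolding e g_def by (simp add: inner_commute)
  qed
  have gr: "grad (\<lambda>x. - ln (r \<bullet> bar x)) w = g" by (rule grad_unique[OF der])
  have val: "g \<bullet> (u - w) = 1 - N / D"
  proof -
    have "g \<bullet> (u - w) = (a \<bullet> w - a \<bullet> u) / D"
      unfolding g_def by (simp add: inner_diff_right divide_simps algebra_simps)
    also have "\<dots> = (D - N) / D" unfolding N_def D_def rb by simp
    also have "\<dots> = 1 - N / D" using Dpos by (simp add: diff_divide_distrib)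
    finally show ?thesis .
  qed
  have "\<bar>1 - N / D\<bar> \<le> max 1 M"
  proof -
    have "N / D \<le> M" using NM Dpos by (simp add: divide_le_eq)
    moreover have "N / D \<ge> 0" using N0 Dpos by simp
    ultimately show ?thesis by auto
  qed
  then show ?thesis using gr val M_def by simp
qed

end
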